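(* Let $n\ge 4$, $N=\{1,\dots,n\}$, fix distinct $i_1,i_2\in N$ and let $\hat N^c=N\setminus\{i_1,i_2\}$. Then the inequality $$x_{i_2i_1}+\sum_{j\in\hat N^c}\left(x_{i_1j}+x_{ji_2}\right)-x_{i_1i_2}-\sum_{j,j'\in\hat N^c:\,j\ne j'} x_{jj'}\le 2-\frac{(n-4)(n-5)}{2}$$ is a valid inequality for the weak order polytope $P^n_{WO}$, i.e. it holds for every point $x\in P^n_{WO}$.
   Context: Let $N=\{1,\dots,n\}$ and $A_N=\{(i,j): i,j\in N, i\ne j\}$. A weak order on $N$ is a binary relation $W\subseteq N\times N$ that is reflexive, transitive and total; $(i,j)\in W$ is read "$i$ is preferred over or tied with $j$". The characteristic vector of $W$ is $x^W\in\{0,1\}^{A_N}$ with $x^W_{(i,j)}=1$ if $(i,j)\in W$ and $0$ otherwise. The weak order polytope $P^n_{WO}$ is the convex hull of the characteristic vectors of all weak orders on $N$; its points are vectors $x\in\mathbb{R}^{A_N}$ and $x_{ij}$ denotes the coordinate $x_{(i,j)}$. *)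

theory Defs
  imports "HOL-Analysis.Analysis"
begin

definition arcs :: "nat \<Rightarrow> (nat \<times> nat) set" where
  "arcs n = {(i, j). i \<in> {1..n} \<and> j \<in> {1..n} \<and> i \<noteq> j}"

definition weak_order_on :: "nat set \<Rightarrow> (nat \<times> nat) set \<Rightarrow> bool" where
  "weak_order_on N W \<longleftrightarrow> W \<subseteq> N \<times> N \<and> refl_on N W \<and> trans W \<and> total_on N W"

text \<open>Points of R^{A_N} are modelled as functions on nat \<times> nat that vanish outside A_N.\<close>
definition char_vec :: "nat \<Rightarrow> (nat \<times> nat) set \<Rightarrow> (nat \<times> nat \<Rightarrow> real)" where
  "char_vec n W = (\<lambda>a. if a \<in> arcs n \<and> a \<in> W then 1 else 0)"

text \<open>Convex hull of a set of functions (the function space is not a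
  real_vector instance in the library, so we spell out the convex hull as
  the set of finite convex combinations).\<close>
definition conv_hull_fun :: "('a \<Rightarrow> real) set \<Rightarrow> ('a \<Rightarrow> real) set" where
  "conv_hull_fun S = {y. \<exists>T u. finite T \<and> T \<subseteq> S \<and> (\<forall>v\<in>T. u v \<ge> 0) \<and> sum u T = 1
                          \<and> y = (\<lambda>a. \<Sum>v\<in>T. u v * v a)}"

definition weak_order_polytope :: "nat \<Rightarrow> (nat \<times> nat \<Rightarrow> real) set" where
  "weak_order_polytope n =
     conv_hull_fun {char_vec n W | W. weak_order_on {1..n} W}"

end

theory Submission
  imports Defs
begin

lemma card_offdiag:
  assumes "finite S"
  shows "card {(a,b). a \<in> S \<and> b \<in> S \<and> a \<noteq> b} = card S * card S - card S"
proof -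
  have e: "{(a,b). a \<in> S \<and> b \<in> S \<and> a \<noteq> b} = S \<times> S - (\<lambda>a. (a,a)) ` S" by auto
  have "card ((\<lambda>a. (a,a)) ` S) = card S" by (rule card_image) (auto simp: inj_on_def)
  moreover have "(\<lambda>a. (a,a)) ` S \<subseteq> S \<times> S" by auto
  ultimately show ?thesis unfolding e using assms
    by (simp add: card_Diff_subset card_cartesian_product finite_imageI)
qed

lemma card_ineq:
  assumes fin: "finite Pr" and sy: "\<And>a b. (a,b) \<in> Pr \<Longrightarrow> (b,a) \<in> Pr"
    and tot: "\<And>a b. (a,b) \<in> Pr \<Longrightarrow> (a,b) \<in> W \<or> (b,a) \<in> W"
    and D: "D \<subseteq> {p. p \<in> Pr \<and> p \<in> W \<and> prod.swap p \<in> W}"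
  shows "card Pr + card D \<le> 2 * card {p \<in> Pr. p \<in> W}"
proof -
  define Q where "Q = {p \<in> Pr. p \<in> W}"
  have finQ: "finite Q" using fin by (simp add: Q_def)
  have c1: "card (prod.swap ` Q) = card Q" by (rule card_image) (auto simp: inj_on_def)
  have sub1: "Pr - Q \<subseteq> prod.swap ` Q - D"
  proof
    fix p assume p: "p \<in> Pr - Q"
    obtain a b where ab: "p = (a,b)" by (cases p)
    have "(a,b) \<notin> W" using p ab by (auto simp: Q_def)
    hence "(b,a) \<in> W" using tot p ab by auto
    hence "(b,a) \<in> Q" using sy p ab by (auto simp: Q_def)
    hence "p \<in> prod.swap ` Q" using ab by (metis swap_simp image_eqI)
    moreover have "p \<notin> D" using D \<open>(a,b) \<notin> W\<close> ab by auto
    ultimately show "p \<in> prod.swap ` Q - D" by auto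
  qed
  have sub2: "D \<subseteq> prod.swap ` Q"
  proof
    fix p assume "p \<in> D"
    then obtain a b where ab: "p = (a,b)" "(a,b) \<in> Pr" "(a,b) \<in> W" "(b,a) \<in> W" using D by (cases p) auto
    hence "(b,a) \<in> Q" using sy by (auto simp: Q_def)
    thus "p \<in> prod.swap ` Q" using ab by (metis swap_simp image_eqI)
  qed
  have finD: "finite D" using sub2 finQ finite_subset by blast
  have "card (Pr - Q) \<le> card (prod.swap ` Q - D)"
    using finQ by (intro card_mono[OF _ sub1]) simp
  also have "\<dots> = card Q - card D" using c1 sub2 finD by (simp add: card_Diff_subset)
  finally have h: "card (Pr - Q) \<le> card Q - card D" .
  have QP: "Q \<subseteq> Pr" by (auto simp: Q_def)
  have "card Q \<le> card Pr" using card_mono[OF fin QP] .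
  hence "card Pr = card Q + card (Pr - Q)"
    using card_Diff_subset[OF finQ QP] by simp
  moreover have "card D \<le> card Q" using card_mono[OF finite_imageI[OF finQ] sub2] c1 by simp
  ultimately show ?thesis using h by (simp add: Q_def)
qed


definition Lf :: "nat \<Rightarrow> nat \<Rightarrow> nat \<Rightarrow> (nat \<times> nat \<Rightarrow> real) \<Rightarrow> real" where
  "Lf n i1 i2 x = x (i2, i1) + (\<Sum>j\<in>{1..n} - {i1, i2}. x (i1, j) + x (j, i2)) - x (i1, i2)
     - (\<Sum>p\<in>{(j, j'). j \<in> {1..n} - {i1, i2} \<and> j' \<in> {1..n} - {i1, i2} \<and> j \<noteq> j'}. x p)"

lemma arith_final:
  fixes m k :: nat
  assumes "k \<le> m" "2 \<le> m"
  shows "2 * real k - (real k * real k - real k) \<le> 2 * real m - 2"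
proof -
  have "(real k - 1) * (real k - 2) \<ge> 0"
  proof (cases "k \<le> 1")
    case True
    hence "real k - 1 \<le> 0" "real k - 2 \<le> 0" by auto
    thus ?thesis by (simp add: mult_nonpos_nonpos)
  next
    case False
    hence "real k - 1 \<ge> 0" "real k - 2 \<ge> 0" by auto
    thus ?thesis by simp
  qed
  hence "real k * real k - real k \<ge> 2 * real k - 2" by (simp add: algebra_simps)
  moreover have "real m \<ge> 2" using assms by simp
  ultimately show ?thesis by linarith
qed

lemma vertex:
  assumes n4: "n \<ge> 4" and i1: "i1 \<in> {1..n}" and i2: "i2 \<in> {1..n}" and ne: "i1 \<noteq> i2"
    and wo: "weak_order_on {1..n} W"
  shows "Lf n i1 i2 (char_vec n W) \<le> 2 - (real n - 4) * (real n - 5) / 2"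
proof -
  define Nc where "Nc = {1..n} - {i1,i2}"
  define Pr where "Pr = {(j,j'). j \<in> Nc \<and> j' \<in> Nc \<and> j \<noteq> j'}"
  define K where "K = {j \<in> Nc. (i1,j) \<in> W \<and> (j,i2) \<in> W}"
  define v where "v = char_vec n W"
  define m where "m = card Nc"
  define k where "k = card K"
  have WN: "W \<subseteq> {1..n} \<times> {1..n}" and tr: "\<And>a b c. (a,b) \<in> W \<Longrightarrow> (b,c) \<in> W \<Longrightarrow> (a,c) \<in> W"
    and tot: "\<And>a b. a \<in> {1..n} \<Longrightarrow> b \<in> {1..n} \<Longrightarrow> a \<noteq> b \<Longrightarrow> (a,b) \<in> W \<or> (b,a) \<in> W"
    using wo unfolding weak_order_on_def trans_def total_on_def by blast+
  have finNc: "finite Nc" by (simp add: Nc_def)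
  have m: "m = n - 2" unfolding m_def Nc_def using i1 i2 ne
    by (subst card_Diff_subset) auto
  have rn: "real n = real m + 2" using m n4 by simp
  have km: "k \<le> m" unfolding k_def m_def K_def by (rule card_mono[OF finNc]) auto
  have Lv: "Lf n i1 i2 v = v (i2, i1) + (\<Sum>j\<in>Nc. v (i1, j) + v (j, i2)) - v (i1, i2) - (\<Sum>p\<in>Pr. v p)"
    by (simp add: Lf_def Nc_def Pr_def)
  have v1: "v (i2,i1) = (if (i2,i1) \<in> W then 1 else 0)" "v (i1,i2) = (if (i1,i2) \<in> W then 1 else 0)"
    using i1 i2 ne by (auto simp: v_def char_vec_def arcs_def)
  have A: "(\<Sum>j\<in>Nc. v (i1, j) + v (j, i2)) \<le> real m + real k"
  proof -
    have "(\<Sum>j\<in>Nc. v (i1, j) + v (j, i2)) \<le> (\<Sum>j\<in>Nc. 1 + (if j \<in> K then 1 else 0))"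
      by (rule sum_mono) (auto simp: v_def char_vec_def K_def)
    also have "\<dots> = real m + real (card (Nc \<inter> K))"
      by (simp add: sum.distrib m_def sum.If_cases finNc)
    also have "Nc \<inter> K = K" by (auto simp: K_def)
    finally show ?thesis by (simp add: k_def)
  qed
  have finPr: "finite Pr"
  proof -
    have "Pr \<subseteq> Nc \<times> Nc" by (auto simp: Pr_def)
    thus ?thesis using finNc finite_subset by blast
  qed
  have Psum: "(\<Sum>p\<in>Pr. v p) = real (card {p \<in> Pr. p \<in> W})"
  proof -
    have "(\<Sum>p\<in>Pr. v p) = (\<Sum>p\<in>Pr. if p \<in> W then 1 else 0)"
      by (rule sum.cong) (auto simp: v_def char_vec_def arcs_def Pr_def Nc_def)
    also have "\<dots> = real (card (Pr \<inter> {p. p \<in> W}))" by (simp add: sum.If_cases finPr)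
    also have "Pr \<inter> {p. p \<in> W} = {p \<in> Pr. p \<in> W}" by auto
    finally show ?thesis .
  qed
  have cPr: "real (card Pr) = real m * real m - real m"
  proof -
    have "card Pr = m * m - m" unfolding Pr_def m_def by (rule card_offdiag[OF finNc])
    moreover have "m \<le> m * m" by simp
    ultimately show ?thesis by (simp add: of_nat_diff)
  qed
  have PD: "real (card Pr) + real (card D) \<le> 2 * (\<Sum>p\<in>Pr. v p)"
    if D: "D \<subseteq> {p. p \<in> Pr \<and> p \<in> W \<and> prod.swap p \<in> W}" for D
  proof -
    have "card Pr + card D \<le> 2 * card {p \<in> Pr. p \<in> W}"
    proof (rule card_ineq[OF finPr _ _ D])
      show "\<And>a b. (a, b) \<in> Pr \<Longrightarrow> (b, a) \<in> Pr" by (auto simp: Pr_def)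
      show "\<And>a b. (a, b) \<in> Pr \<Longrightarrow> (a, b) \<in> W \<or> (b, a) \<in> W"
        using tot by (auto simp: Pr_def Nc_def)
    qed
    hence "real (card Pr + card D) \<le> real (2 * card {p \<in> Pr. p \<in> W})" by linarith
    thus ?thesis using Psum by simp
  qed
  have P0: "real m * real m - real m \<le> 2 * (\<Sum>p\<in>Pr. v p)"
    using PD[of "{}"] cPr by simp
  have t12: "(i1,i2) \<in> W \<or> (i2,i1) \<in> W" using tot i1 i2 ne by blast
  have ar: "(real n - 4) * (real n - 5) = (real m - 2) * (real m - 3)" using rn by simp
  have m2: "m \<ge> 2" using m n4 by simp
  have m2r: "real m \<ge> 2" using m2 by simp
  have kmr: "real k \<le> real m" using km by simp
  have e5: "(real m - 2) * (real m - 3) = real m * real m - 5 * real m + 6" by (simp add: algebra_simps)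
  have "Lf n i1 i2 v \<le> 2 - (real m - 2) * (real m - 3) / 2"
  proof (cases "(i1,i2) \<in> W")
    case False
    hence "K = {}" using tr by (auto simp: K_def)
    hence "k = 0" by (simp add: k_def)
    have "(i2,i1) \<in> W" using False t12 by simp
    hence "v (i2,i1) = 1" "v (i1,i2) = 0" using v1 False by auto
    thus ?thesis using Lv A P0 \<open>k = 0\<close> m2r e5 by linarith
  next
    case T: True
    show ?thesis
    proof (cases "(i2,i1) \<in> W")
      case False
      hence "v (i2,i1) = 0" "v (i1,i2) = 1" using v1 T by auto
      thus ?thesis using Lv A P0 kmr m2r e5 by linarith
    next
      case True
      define D where "D = {(a,b). a \<in> K \<and> b \<in> K \<and> a \<noteq> b}"
      have "D \<subseteq> {p. p \<in> Pr \<and> p \<in> W \<and> prod.swap p \<in> W}"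
      proof
        fix p assume "p \<in> D"
        then obtain a b where ab: "p = (a,b)" "a \<in> K" "b \<in> K" "a \<noteq> b" by (auto simp: D_def)
        have "(a,b) \<in> W" using ab tr True by (metis (no_types, lifting) K_def mem_Collect_eq)
        moreover have "(b,a) \<in> W" using ab tr True by (metis (no_types, lifting) K_def mem_Collect_eq)
        ultimately show "p \<in> {p. p \<in> Pr \<and> p \<in> W \<and> prod.swap p \<in> W}"
          using ab by (auto simp: Pr_def K_def)
      qed
      note PDD = PD[OF this]
      have finK: "finite K" using finNc by (simp add: K_def)
      have "card D = k * k - k" unfolding D_def k_def by (rule card_offdiag[OF finK])
      hence cD: "real (card D) = real k * real k - real k" by (simp add: of_nat_diff)
      have af2: "2 * real k - (real k * real k - real k) \<le> 2 * real m - 2"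
        using arith_final[OF km m2] .
      have "v (i2,i1) = 1" "v (i1,i2) = 1" using v1 T True by auto
      hence q1: "Lf n i1 i2 v = (\<Sum>j\<in>Nc. v (i1, j) + v (j, i2)) - sum v Pr" using Lv by simp
      have q2: "real m * real m - real m + (real k * real k - real k) \<le> 2 * sum v Pr"
        using PDD unfolding cPr cD .
      have l1: "2 * Lf n i1 i2 v \<le> 3 * real m + 3 * real k - real m * real m - real k * real k"
        using q1 q2 A by linarith
      have "2 * Lf n i1 i2 v \<le> 4 - (real m - 2) * (real m - 3)"
        unfolding e5 using l1 af2 by linarith
      thus ?thesis by simp
    qed
  qed
  thus ?thesis using ar by (simp add: v_def)
qed

lemma Lf_lin:
  "Lf n i1 i2 (\<lambda>a. \<Sum>v\<in>T. u v * v a) = (\<Sum>v\<in>T. u v * Lf n i1 i2 v)"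
  unfolding Lf_def
  by (simp add: sum.distrib sum_subtractf sum_distrib_left algebra_simps sum.swap[of _ T])

theorem mainTheorem2:
  fixes n i1 i2 :: nat and x :: "nat \<times> nat \<Rightarrow> real"
  assumes "n \<ge> 4"
    and "i1 \<in> {1..n}" and "i2 \<in> {1..n}" and "i1 \<noteq> i2"
    and "x \<in> weak_order_polytope n"
  shows "x (i2, i1)
           + (\<Sum>j\<in>{1..n} - {i1, i2}. x (i1, j) + x (j, i2))
           - x (i1, i2)
           - (\<Sum>(j, j')\<in>{(j, j'). j \<in> {1..n} - {i1, i2} \<and> j' \<in> {1..n} - {i1, i2} \<and> j \<noteq> j'}. x (j, j'))
         \<le> 2 - (real n - 4) * (real n - 5) / 2"
proof -
  define B where "B = 2 - (real n - 4) * (real n - 5) / 2"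
  obtain T u where T: "finite T" "T \<subseteq> {char_vec n W | W. weak_order_on {1..n} W}"
    "\<forall>v\<in>T. u v \<ge> 0" "sum u T = 1" "x = (\<lambda>a. \<Sum>v\<in>T. u v * v a)"
    using assms(5) unfolding weak_order_polytope_def conv_hull_fun_def by blast
  have "Lf n i1 i2 x = (\<Sum>v\<in>T. u v * Lf n i1 i2 v)" using T(5) Lf_lin by simp
  also have "\<dots> \<le> (\<Sum>v\<in>T. u v * B)"
  proof (rule sum_mono)
    fix v assume "v \<in> T"
    then obtain W where "v = char_vec n W" "weak_order_on {1..n} W" using T(2) by blast
    hence "Lf n i1 i2 v \<le> B" using vertex assms(1-4) B_def by blast
    thus "u v * Lf n i1 i2 v \<le> u v * B" using T(3) \<open>v \<in> T\<close> by (simp add: mult_left_mono)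
  qed
  also have "\<dots> = B" using T(4) by (simp add: sum_distrib_right[symmetric])
  finally have "Lf n i1 i2 x \<le> B" .
  thus ?thesis by (simp add: Lf_def B_def case_prod_beta')
qed

end
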